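(* Let $I$ be a nonempty open real interval and let $P(u)=\alpha+\beta u+\gamma u^2$ ($\alpha,\beta,\gamma\in\mathbb{R}$) be a polynomial of degree at most two which is positive on $I$. Let $D_P:=\beta^2-4\alpha\gamma$ be its discriminant and let $t\in\,]0,1[\,$ satisfy $(t-\frac12)D_P=0$. Let $\psi$ be a primitive function of $1/P$ on $I$ and let $\ell:=1/\sqrt{P}$. Then the functions $\varphi:=\psi^{-1}$ and $f:=\ell\circ\varphi$, defined on the interval $\psi(I)$, satisfy \[ \big(tf(x)+(1-t)f(y)\big)\varphi(tx+(1-t)y)=tf(x)\varphi(x)+(1-t)f(y)\varphi(y) \qquad\text{for all } x,y\in \psi(I). \] *)

theory Defs
  imports "HOL-Analysis.Analysis"
begin

end

theory Submission
  imports Defs "HOL-Complex_Analysis.Conformal_Mappings"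
begin

lemma affine_of_d2:
  fixes h h' :: "real \<Rightarrow> real"
  assumes "convex J" "\<And>z. z \<in> J \<Longrightarrow> (h has_real_derivative h' z) (at z)"
    "\<And>z. z \<in> J \<Longrightarrow> (h' has_real_derivative 0) (at z)"
  shows "\<exists>a b. \<forall>z\<in>J. h z = a * z + b"
proof -
  obtain a where a: "\<forall>z\<in>J. h' z = a"
    using has_field_derivative_zero_constant[OF assms(1)] assms(3) has_field_derivative_at_within by blast
  have "((\<lambda>z. h z - a * z) has_real_derivative 0) (at z within J)" if "z \<in> J" for z
  proof -
    have "((\<lambda>z. h z - a * z) has_real_derivative h' z - a * 1) (at z)"
      by (intro DERIV_diff assms(2)[OF that] DERIV_cmult DERIV_ident)
    then show ?thesis using a that has_field_derivative_at_within by fastforce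
  qed
  then obtain b where "\<forall>z\<in>J. h z - a * z = b"
    using has_field_derivative_zero_constant[OF assms(1)] by blast
  then show ?thesis by (metis add.commute diff_eq_eq)
qed

theorem lemma2p4:
  fixes I :: "real set" and \<alpha> \<beta> \<gamma> t :: real and \<psi> :: "real \<Rightarrow> real"
  assumes "open I" and "is_interval I" and "I \<noteq> {}"
    and "\<forall>u\<in>I. \<alpha> + \<beta> * u + \<gamma> * u^2 > 0"
    and "0 < t" and "t < 1"
    and "(t - 1/2) * (\<beta>^2 - 4 * \<alpha> * \<gamma>) = 0"
    and "\<forall>u\<in>I. (\<psi> has_real_derivative 1 / (\<alpha> + \<beta> * u + \<gamma> * u^2)) (at u)"
  defines "l \<equiv> (\<lambda>u. 1 / sqrt (\<alpha> + \<beta> * u + \<gamma> * u^2))"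
    and "\<phi> \<equiv> inv_into I \<psi>"
  defines "f \<equiv> l \<circ> \<phi>"
  shows "\<forall>x\<in>\<psi> ` I. \<forall>y\<in>\<psi> ` I.
           (t * f x + (1 - t) * f y) * \<phi> (t * x + (1 - t) * y)
             = t * f x * \<phi> x + (1 - t) * f y * \<phi> y"
proof -
  define P where "P u = \<alpha> + \<beta> * u + \<gamma> * u^2" for u
  define J where "J = \<psi> ` I"
  define g where "g x = f x * \<phi> x" for x
  have Ppos: "u \<in> I \<Longrightarrow> P u > 0" for u using assms(4) P_def by auto
  have dpsi: "u \<in> I \<Longrightarrow> (\<psi> has_real_derivative 1 / P u) (at u)" for u
    using assms(8) P_def by auto
  have cont: "continuous_on I \<psi>"
    using dpsi DERIV_isCont continuous_at_imp_continuous_on by blast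
  have mono: "\<psi> a < \<psi> b" if "a \<in> I" "b \<in> I" "a < b" for a b
  proof (rule DERIV_pos_imp_increasing[OF \<open>a < b\<close>])
    fix x assume "a \<le> x" "x \<le> b"
    then have "x \<in> I" using assms(2) that unfolding is_interval_1 by blast
    then show "\<exists>y. DERIV \<psi> x :> y \<and> y > 0" using dpsi[of x] Ppos[of x] by (intro exI[of _ "1 / P x"]) simp
  qed
  have inj: "inj_on \<psi> I"
    unfolding inj_on_def by (metis linorder_neqE_linordered_idom mono order_less_irrefl)
  have phipsi: "u \<in> I \<Longrightarrow> \<phi> (\<psi> u) = u" for u using inj assms(10) by simp
  have phiI: "x \<in> J \<Longrightarrow> \<phi> x \<in> I" for x unfolding J_def assms(10) by (simp add: inv_into_into)
  have dphi: "(\<phi> has_real_derivative P (\<phi> x)) (at x)" if xJ: "x \<in> J" for x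
  proof -
    obtain u where u: "u \<in> I" "x = \<psi> u" using xJ unfolding J_def by blast
    have "(\<phi> has_real_derivative inverse (1 / P u)) (at (\<psi> u))"
      by (rule has_field_derivative_inverse_strong[OF dpsi[OF u(1)] _ assms(1) u(1) cont phipsi])
        (use Ppos[OF u(1)] in auto)
    then show ?thesis using u phipsi by simp
  qed
  have Jint: "is_interval J"
  proof -
    have "connected I" using assms(2) is_interval_connected by blast
    then have "connected J" unfolding J_def using cont connected_continuous_image by blast
    then show ?thesis using is_interval_connected_1 by blast
  qed
  have fx: "f x = 1 / sqrt (P (\<phi> x))" for x unfolding f_def l_def P_def by simp
  have fpos: "x \<in> J \<Longrightarrow> f x > 0" for x using fx Ppos phiI by simp
  have dh: "((\<lambda>u. 1 / sqrt (P u)) has_real_derivative (-(\<beta> + 2*\<gamma>*u) / (2 * sqrt (P u) * P u))) (at u)"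
    if "P u > 0" for u
  proof -
    have "((\<lambda>u. 1 / sqrt (P u)) has_real_derivative
       (- (inverse (sqrt (P u)) / 2 * (\<beta> + \<gamma> * (2 * u)) / (sqrt (P u))\<^sup>2))) (at u)"
      unfolding P_def using that unfolding P_def
      by (auto intro!: derivative_eq_intros simp: power2_eq_square)
    moreover have "(- (inverse (sqrt (P u)) / 2 * (\<beta> + \<gamma> * (2 * u)) / (sqrt (P u))\<^sup>2))
       = (-(\<beta> + 2*\<gamma>*u) / (2 * sqrt (P u) * P u))"
      using that by (simp add: field_simps)
    ultimately show ?thesis by simp
  qed
  have df: "(f has_real_derivative (-(\<beta> * f x + 2 * \<gamma> * g x) / 2)) (at x)" if "x \<in> J" for x
  proof -
    have p: "P (\<phi> x) > 0" using Ppos phiI that by blast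
    have "((\<lambda>x. 1 / sqrt (P (\<phi> x))) has_real_derivative
        (-(\<beta> + 2*\<gamma>*\<phi> x) / (2 * sqrt (P (\<phi> x)) * P (\<phi> x))) * P (\<phi> x)) (at x)"
      by (rule DERIV_chain2[OF dh[OF p] dphi[OF that]])
    moreover have "(-(\<beta> + 2*\<gamma>*\<phi> x) / (2 * sqrt (P (\<phi> x)) * P (\<phi> x))) * P (\<phi> x)
        = (-(\<beta> * f x + 2 * \<gamma> * g x) / 2)"
      using p unfolding g_def fx by (simp add: field_simps)
    moreover have "f = (\<lambda>x. 1 / sqrt (P (\<phi> x)))" using fx by auto
    ultimately show ?thesis by metis
  qed
  have dg: "(g has_real_derivative (\<alpha> * f x + \<beta> * g x / 2)) (at x)" if "x \<in> J" for x
  proof -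
    have p: "P (\<phi> x) > 0" using Ppos phiI that by blast
    have "((\<lambda>x. f x * \<phi> x) has_real_derivative f x * P (\<phi> x) + (-(\<beta> * f x + 2 * \<gamma> * g x) / 2) * \<phi> x) (at x)"
      by (rule DERIV_mult'[OF df[OF that] dphi[OF that]])
    moreover have "g = (\<lambda>x. f x * \<phi> x)" using g_def by auto
    moreover have "f x * P (\<phi> x) + (-(\<beta> * f x + 2 * \<gamma> * g x) / 2) * \<phi> x = \<alpha> * f x + \<beta> * g x / 2"
      unfolding g_def P_def by (simp add: field_simps power2_eq_square)
    ultimately show ?thesis by metis
  qed
  have conv: "convex J" using Jint is_interval_convex by blast
  show ?thesis
  proof (intro ballI)
    fix x y assume "x \<in> \<psi> ` I" "y \<in> \<psi> ` I"
    then have xJ: "x \<in> J" and yJ: "y \<in> J" unfolding J_def by auto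
    define m where "m = t * x + (1 - t) * y"
    have mJ: "m \<in> J" using convexD[OF conv xJ yJ, of t "1 - t"] assms(5,6) unfolding m_def by simp
    have key: "f m * (t * g x + (1 - t) * g y) = g m * (t * f x + (1 - t) * f y)"
    proof (cases "t = 1/2")
      case True
      define h where "h = y - m"
      have hm: "m = x + h" unfolding h_def m_def True by simp
      define S where "S = {s. s \<in> J \<and> s + h \<in> J}"
      have "is_interval S" unfolding is_interval_1
      proof (intro ballI allI impI)
        fix a b z assume ab: "a \<in> S" "b \<in> S" "a \<le> z \<and> z \<le> b"
        have "z \<in> J" using Jint[unfolded is_interval_1] ab unfolding S_def by blast
        moreover have "z + h \<in> J"
          using Jint[unfolded is_interval_1, rule_format, of "a+h" "b+h" "z+h"] ab unfolding S_def by auto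
        ultimately show "z \<in> S" unfolding S_def by simp
      qed
      then have convS: "convex S" using is_interval_convex by blast
      define K where "K s = f s * g (s + h) - g s * f (s + h)" for s
      have "(K has_real_derivative 0) (at s within S)" if sS: "s \<in> S" for s
      proof -
        have sJ: "s \<in> J" and shJ: "s + h \<in> J" using sS unfolding S_def by auto
        have dfs: "((\<lambda>s. f (s + h)) has_real_derivative (-(\<beta> * f (s+h) + 2 * \<gamma> * g (s+h)) / 2)) (at s)"
          using df[OF shJ] DERIV_shift by blast
        have dgs: "((\<lambda>s. g (s + h)) has_real_derivative (\<alpha> * f (s+h) + \<beta> * g (s+h) / 2)) (at s)"
          using dg[OF shJ] DERIV_shift by blast
        have "(K has_real_derivative
            (f s * (\<alpha> * f (s+h) + \<beta> * g (s+h) / 2) + (-(\<beta> * f s + 2 * \<gamma> * g s) / 2) * g (s+h))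
          - (g s * (-(\<beta> * f (s+h) + 2 * \<gamma> * g (s+h)) / 2) + (\<alpha> * f s + \<beta> * g s / 2) * f (s+h))) (at s)"
          unfolding K_def[abs_def]
          by (intro DERIV_diff DERIV_mult' df[OF sJ] dg[OF sJ] dfs dgs)
        moreover have "(f s * (\<alpha> * f (s+h) + \<beta> * g (s+h) / 2) + (-(\<beta> * f s + 2 * \<gamma> * g s) / 2) * g (s+h))
          - (g s * (-(\<beta> * f (s+h) + 2 * \<gamma> * g (s+h)) / 2) + (\<alpha> * f s + \<beta> * g s / 2) * f (s+h)) = 0"
          by (simp add: algebra_simps diff_divide_distrib add_divide_distrib)
        ultimately show ?thesis using has_field_derivative_at_within by metis
      qed
      then obtain c where c: "\<forall>s\<in>S. K s = c"
        using has_field_derivative_zero_constant[OF convS] by blast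
      have "x \<in> S" using xJ mJ hm unfolding S_def by simp
      moreover have "m \<in> S" using mJ yJ unfolding S_def h_def by simp
      ultimately have "K x = K m" using c by simp
      moreover have e1: "x + h = m" using hm by simp
      moreover have e2: "m + h = y" unfolding h_def by simp
      ultimately have "f x * g m - g x * f m = f m * g y - g m * f y"
        unfolding K_def by simp
      then have eq: "f m * (g x + g y) = g m * (f x + f y)" by (simp add: algebra_simps)
      have "f m * (t * g x + (1 - t) * g y) = (f m * (g x + g y)) / 2" unfolding True by (simp add: algebra_simps)
      also have "\<dots> = (g m * (f x + f y)) / 2" using eq by simp
      also have "\<dots> = g m * (t * f x + (1 - t) * f y)" unfolding True by (simp add: algebra_simps)
      finally show ?thesis .
    next
      case False
      then have D0: "\<beta>^2 - 4 * \<alpha> * \<gamma> = 0" using assms(7) by simp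
      have "\<exists>a b. \<forall>z\<in>J. f z = a * z + b"
      proof (rule affine_of_d2[OF conv df])
        fix z assume z: "z \<in> J"
        have "((\<lambda>x. -(\<beta> * f x + 2 * \<gamma> * g x) / 2) has_real_derivative
           -(\<beta> * (-(\<beta> * f z + 2 * \<gamma> * g z) / 2) + 2 * \<gamma> * (\<alpha> * f z + \<beta> * g z / 2)) / 2) (at z)"
          by (intro DERIV_cdivide DERIV_minus DERIV_add DERIV_cmult df[OF z] dg[OF z])
        moreover have "-(\<beta> * (-(\<beta> * f z + 2 * \<gamma> * g z) / 2) + 2 * \<gamma> * (\<alpha> * f z + \<beta> * g z / 2)) / 2
            = (\<beta>^2 - 4 * \<alpha> * \<gamma>) * f z / 4"
          by (simp add: field_simps power2_eq_square)
        ultimately show "((\<lambda>x. -(\<beta> * f x + 2 * \<gamma> * g x) / 2) has_real_derivative 0) (at z)"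
          using D0 by simp
      qed
      then obtain a1 b1 where fa: "\<forall>z\<in>J. f z = a1 * z + b1" by blast
      have "\<exists>a b. \<forall>z\<in>J. g z = a * z + b"
      proof (rule affine_of_d2[OF conv dg])
        fix z assume z: "z \<in> J"
        have "((\<lambda>x. \<alpha> * f x + \<beta> * g x / 2) has_real_derivative
           \<alpha> * (-(\<beta> * f z + 2 * \<gamma> * g z) / 2) + \<beta> * (\<alpha> * f z + \<beta> * g z / 2) / 2) (at z)"
          by (intro DERIV_cdivide DERIV_add DERIV_cmult df[OF z] dg[OF z])
        moreover have "\<alpha> * (-(\<beta> * f z + 2 * \<gamma> * g z) / 2) + \<beta> * (\<alpha> * f z + \<beta> * g z / 2) / 2
            = (\<beta>^2 - 4 * \<alpha> * \<gamma>) * g z / 4"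
          by (simp add: field_simps power2_eq_square)
        ultimately show "((\<lambda>x. \<alpha> * f x + \<beta> * g x / 2) has_real_derivative 0) (at z)"
          using D0 by simp
      qed
      then obtain a2 b2 where ga: "\<forall>z\<in>J. g z = a2 * z + b2" by blast
      have "f m = t * f x + (1 - t) * f y" using fa xJ yJ mJ unfolding m_def by (simp add: algebra_simps)
      moreover have "g m = t * g x + (1 - t) * g y" using ga xJ yJ mJ unfolding m_def by (simp add: algebra_simps)
      ultimately show ?thesis by simp
    qed
    have fm: "f m > 0" using fpos mJ by blast
    have "f m * ((t * f x + (1 - t) * f y) * \<phi> m) = f m * (t * f x * \<phi> x + (1 - t) * f y * \<phi> y)"
      using key unfolding g_def by (simp add: algebra_simps)
    then show "(t * f x + (1 - t) * f y) * \<phi> (t * x + (1 - t) * y) = t * f x * \<phi> x + (1 - t) * f y * \<phi> y"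
      using fm unfolding m_def by simp
  qed
qed

end
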